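(* Let $X$ be an $L$-topological space and $p\in{\rm pt}_L\mathcal O(X)$. If $A$ is a super-compact open set, then ${\rm sub}_{\mathcal O(X)}([A],p)=p(A)$, where $[A]:\mathcal O(X)\to L$ is $[A](B)={\rm sub}_X(A,B)$.
   Context: $L$ is a frame with implication $\to$. ${\rm sub}_X(A,B)=\bigwedge_{x\in X}A(x)\to B(x)$ for $A,B\in L^X$. $L$-topology: $\mathcal O(X)\subseteq L^X$ closed under finite meets and arbitrary joins containing all constants $a_X$. Super-compact: $A\in L^X$ with $\bigvee_xA(x)=1$ and ${\rm sub}_X(A,\bigvee_iV_i)=\bigvee_i{\rm sub}_X(A,V_i)$ for every family of open $V_i$. A point of $\mathcal O(X)$: $p:\mathcal O(X)\to L$ with $p(A\wedge B)=p(A)\wedge p(B)$, $p(\bigvee_iA_i)=\bigvee_ip(A_i)$, $p(\lambda_X)=\lambda$ for $\lambda\in L$; ${\rm pt}_L\mathcal O(X)$ is the set of points; for maps $p,q:\mathcal O(X)\to L$, ${\rm sub}_{\mathcal O(X)}(p,q)=\bigwedge_{B\in\mathcal O(X)}p(B)\to q(B)$. *)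

theory Defs
  imports Main
begin

class frame = complete_lattice +
  assumes inf_Sup_frame: "inf a (Sup S) = Sup ((\<lambda>b. inf a b) ` S)"

definition fimp :: "'l::frame \<Rightarrow> 'l \<Rightarrow> 'l" where
  "fimp a b = Sup {c. inf c a \<le> b}"

definition subX :: "('a \<Rightarrow> 'l::frame) \<Rightarrow> ('a \<Rightarrow> 'l) \<Rightarrow> 'l" where
  "subX A B = (INF x. fimp (A x) (B x))"

definition L_topology :: "('a \<Rightarrow> 'l::frame) set \<Rightarrow> bool" where
  "L_topology T \<longleftrightarrow>
     (\<forall>a. (\<lambda>_. a) \<in> T) \<and>
     (\<forall>A\<in>T. \<forall>B\<in>T. inf A B \<in> T) \<and>
     (\<forall>S. S \<subseteq> T \<longrightarrow> Sup S \<in> T)"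

definition super_compact :: "('a \<Rightarrow> 'l::frame) set \<Rightarrow> ('a \<Rightarrow> 'l) \<Rightarrow> bool" where
  "super_compact T A \<longleftrightarrow>
     (SUP x. A x) = top \<and>
     (\<forall>(I::('a \<Rightarrow> 'l) set) V. (\<forall>i\<in>I. V i \<in> T) \<longrightarrow>
        subX A (SUP i\<in>I. V i) = (SUP i\<in>I. subX A (V i)))"

definition pt :: "('a \<Rightarrow> 'l::frame) set \<Rightarrow> (('a \<Rightarrow> 'l) \<Rightarrow> 'l) set" where
  "pt T = {p. (\<forall>A\<in>T. \<forall>B\<in>T. p (inf A B) = inf (p A) (p B)) \<and>
             (\<forall>S. S \<subseteq> T \<longrightarrow> p (Sup S) = Sup (p ` S)) \<and>
             (\<forall>a. p (\<lambda>_. a) = a)}"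

definition subO :: "('a \<Rightarrow> 'l::frame) set \<Rightarrow> (('a \<Rightarrow> 'l) \<Rightarrow> 'l) \<Rightarrow> (('a \<Rightarrow> 'l) \<Rightarrow> 'l) \<Rightarrow> 'l" where
  "subO T p q = (INF B\<in>T. fimp (p B) (q B))"

end

theory Submission
  imports Defs
begin

lemma fimp_I: "inf c a \<le> b \<Longrightarrow> c \<le> fimp a b"
  unfolding fimp_def by (rule Sup_upper) simp

lemma fimp_E: "inf (fimp a b) (a::'l::frame) \<le> b"
proof -
  have "inf (fimp a b) a = inf a (fimp a b)" by (simp add: inf_commute)
  also have "\<dots> = Sup ((\<lambda>c. inf a c) ` {c. inf c a \<le> b})"
    unfolding fimp_def by (rule inf_Sup_frame)
  also have "\<dots> \<le> b"
  proof (rule Sup_least)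
    fix y assume "y \<in> (\<lambda>c. inf a c) ` {c. inf c a \<le> b}"
    then obtain c where "inf c a \<le> b" "y = inf a c" by blast
    then show "y \<le> b" by (simp add: inf.commute)
  qed
  finally show ?thesis .
qed

lemma fimp_top: "fimp (top::'l::frame) b = b"
proof (rule antisym)
  show "fimp top b \<le> b" using fimp_E[of top b] by simp
  show "b \<le> fimp top b" by (rule fimp_I) simp
qed

lemma fimp_refl: "fimp (a::'l::frame) a = top"
  by (rule top_le, rule fimp_I, simp)

theorem lemma5p9:
  fixes T :: "('a \<Rightarrow> 'l::frame) set" and A :: "'a \<Rightarrow> 'l" and p :: "('a \<Rightarrow> 'l) \<Rightarrow> 'l"
  assumes "L_topology T"
    and "p \<in> pt T"
    and "A \<in> T"
    and "super_compact T A"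
  shows "subO T (\<lambda>B. subX A B) p = p A"
proof (rule antisym)
  have "subX A A = top" unfolding subX_def by (simp add: fimp_refl)
  then show "subO T (\<lambda>B. subX A B) p \<le> p A"
    unfolding subO_def using INF_lower[OF assms(3), of "\<lambda>B. fimp (subX A B) (p B)"]
    by (simp add: fimp_top)
next
  have inf_p: "\<And>X Y. X \<in> T \<Longrightarrow> Y \<in> T \<Longrightarrow> p (inf X Y) = inf (p X) (p Y)"
    and cst: "\<And>a. p (\<lambda>_. a) = a" using assms(2) unfolding pt_def by auto
  have cT: "\<And>a. (\<lambda>_. a) \<in> T" and iT: "\<And>X Y. X \<in> T \<Longrightarrow> Y \<in> T \<Longrightarrow> inf X Y \<in> T"
    using assms(1) unfolding L_topology_def by auto
  show "p A \<le> subO T (\<lambda>B. subX A B) p"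
    unfolding subO_def
  proof (rule INF_greatest)
    fix B assume B: "B \<in> T"
    define c where "c = subX A B"
    have le: "inf (\<lambda>_. c) A \<le> B"
    proof (rule le_funI)
      fix x
      have "c \<le> fimp (A x) (B x)" unfolding c_def subX_def by (rule INF_lower) simp
      hence "inf c (A x) \<le> inf (fimp (A x) (B x)) (A x)" by (rule inf_mono) simp
      also have "\<dots> \<le> B x" by (rule fimp_E)
      finally show "inf (\<lambda>_. c) A x \<le> B x" by simp
    qed
    hence eq: "inf (inf (\<lambda>_. c) A) B = inf (\<lambda>_. c) A" by (rule inf_absorb1)
    have "inf (p A) c = p (inf (\<lambda>_. c) A)"
      using inf_p[OF cT assms(3)] cst by (simp add: inf_commute)
    also have "\<dots> = p (inf (inf (\<lambda>_. c) A) B)" by (simp add: eq)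
    also have "\<dots> = inf (p (inf (\<lambda>_. c) A)) (p B)"
      by (rule inf_p[OF iT[OF cT assms(3)] B])
    also have "\<dots> \<le> p B" by simp
    finally show "p A \<le> fimp (subX A B) (p B)"
      unfolding c_def by (rule fimp_I)
  qed
qed

end
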